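(* Let $\mathcal{C}$ be the full subcategory of $q\mathrm{Set}=\mathrm{PSh}(\mathrm{Coalg})$ consisting of the presheaves of the form $\mathcal{Y}(D)=\mathrm{Coalg}(-,D)$, $D$ a coalgebra. For coalgebras $D_1,D_2$ and $X_i:=\mathcal{Y}(D_i)$, define for every coalgebra $C$ $$(X_1\times_{\mathcal{C}}X_2)(C):=\{(x_1,x_2)\in X_1(C)\times X_2(C)\ :\ x_1(c_{(1)})\otimes x_2(c_{(2)})=x_1(c_{(2)})\otimes x_2(c_{(1)})\in D_1\otimes D_2\ \text{ for all } c\in C\}.$$ Then: (i) $X_1\times_{\mathcal{C}}X_2$ is a sub-presheaf of the argument-wise product $X_1\times X_2$; for every $(x_1,x_2)\in (X_1\times_{\mathcal{C}}X_2)(C)$ the linear map $(x_1,x_2):C\to D_1\otimes D_2$, $c\mapsto x_1(c_{(1)})\otimes x_2(c_{(2)})$, is a coalgebra map (for the tensor product coalgebra structure on $D_1\otimes D_2$), and $(x_1,x_2)\mapsto (x_1,x_2)$ defines an isomorphism of presheaves $X_1\times_{\mathcal{C}}X_2\cong \mathcal{Y}(D_1\otimes D_2)$; in particular $X_1\times_{\mathcal C}X_2\in\mathcal C$. (ii) (Partial associativity) For coalgebras $D_1,D_2,D_3$, $X_i=\mathcal{Y}(D_i)$, and $x_i\in X_i(C)$, the conditions $$(x_1,x_2)\in (X_1\times_{\mathcal{C}}X_2)(C)\ \text{ and }\ ((x_1,x_2),x_3)\in (\mathcal{Y}(D_1\otimes D_2)\times_{\mathcal{C}}X_3)(C)$$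 hold if and only if $$(x_2,x_3)\in (X_2\times_{\mathcal{C}}X_3)(C)\ \text{ and }\ (x_1,(x_2,x_3))\in (X_1\times_{\mathcal{C}}\mathcal{Y}(D_2\otimes D_3))(C),$$ and in that case $((x_1,x_2),x_3)=(x_1,(x_2,x_3))$ as coalgebra maps $C\to D_1\otimes D_2\otimes D_3$. (iii) (Unit) With $\{\bullet\}=\mathcal{Y}(\Bbbk\{\bullet\})$ the terminal presheaf, for every $X=\mathcal{Y}(D)$ one has $\{\bullet\}\times_{\mathcal{C}}X=\{\bullet\}\times X$ and $X\times_{\mathcal{C}}\{\bullet\}=X\times\{\bullet\}$. (iv) (Symmetry) $(x_1,x_2)\in(X_1\times_{\mathcal{C}}X_2)(C)$ iff $(x_2,x_1)\in(X_2\times_{\mathcal{C}}X_1)(C)$, and then $\tau\circ(x_1,x_2)=(x_2,x_1)$, where $\tau:D_1\otimes D_2\to D_2\otimes D_1$ is the flip.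
   Context: $\Bbbk$ is a field of characteristic zero. $\mathrm{Coalg}$ is the category of counital coassociative $\Bbbk$-coalgebras; Sweedler notation $\Delta(c)=c_{(1)}\otimes c_{(2)}$ is used. The tensor product $D_1\otimes D_2$ of coalgebras has $\Delta(d_1\otimes d_2)=d_{1(1)}\otimes d_{2(1)}\otimes d_{1(2)}\otimes d_{2(2)}$ and $\varepsilon(d_1\otimes d_2)=\varepsilon(d_1)\varepsilon(d_2)$; its unit is $\Bbbk\{\bullet\}$ (one group-like basis element). $q\mathrm{Set}$ is the category of presheaves of sets on $\mathrm{Coalg}$, $\mathcal{Y}$ the Yoneda embedding. The only element of $\mathcal{Y}(\Bbbk\{\bullet\})(C)$ is the counit $\varepsilon_C$ (identified with $c\mapsto\varepsilon(c)\bullet$). *)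

theory Defs
  imports Main
begin

text \<open>Every vector space has a basis, so a coalgebra is
modelled on the space of finitely supported functions B \<Rightarrow> 'k on a basis set B.
Linear maps are given by their (finitely supported) values on basis elements and are
normalised to be zero outside the basis, so the representation is canonical.
Tensor product of spaces with bases B1, B2 is the space with basis B1 \<times> B2.\<close>

record ('b, 'k) coalg =
  cb :: "'b set"
  comult :: "'b \<Rightarrow> 'b \<times> 'b \<Rightarrow> 'k"
  counit :: "'b \<Rightarrow> 'k"

definition vin :: "'a set \<Rightarrow> ('a \<Rightarrow> 'k::zero) \<Rightarrow> bool" where
  "vin B v \<longleftrightarrow> finite {x. v x \<noteq> 0} \<and> {x. v x \<noteq> 0} \<subseteq> B"

definition lin :: "('a \<Rightarrow> 'b \<Rightarrow> 'k::comm_ring_1) \<Rightarrow> ('a \<Rightarrow> 'k) \<Rightarrow> 'b \<Rightarrow> 'k" where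
  "lin f v = (\<lambda>y. \<Sum>x | v x \<noteq> 0. v x * f x y)"

definition idm :: "'a \<Rightarrow> 'a \<Rightarrow> 'k::comm_ring_1" where
  "idm a = (\<lambda>x. if x = a then 1 else 0)"

definition tmap :: "('a \<Rightarrow> 'x \<Rightarrow> 'k::comm_ring_1) \<Rightarrow> ('b \<Rightarrow> 'y \<Rightarrow> 'k) \<Rightarrow> 'a \<times> 'b \<Rightarrow> 'x \<times> 'y \<Rightarrow> 'k" where
  "tmap f g = (\<lambda>p q. f (fst p) (fst q) * g (snd p) (snd q))"

definition is_coalg :: "('b, 'k::field) coalg \<Rightarrow> bool" where
  "is_coalg C \<longleftrightarrow>
     (\<forall>b. b \<notin> cb C \<longrightarrow> comult C b = (\<lambda>_. 0) \<and> counit C b = 0) \<and>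
     (\<forall>b\<in>cb C. vin (cb C \<times> cb C) (comult C b)) \<and>
     (\<forall>b\<in>cb C. \<forall>x y z.
        lin (tmap (comult C) idm) (comult C b) ((x, y), z)
        = lin (tmap idm (comult C)) (comult C b) (x, (y, z))) \<and>
     (\<forall>b\<in>cb C. \<forall>x.
        lin (\<lambda>p x. counit C (fst p) * idm (snd p) x) (comult C b) x = idm b x) \<and>
     (\<forall>b\<in>cb C. \<forall>x.
        lin (\<lambda>p x. idm (fst p) x * counit C (snd p)) (comult C b) x = idm b x)"

definition coalg_map :: "('c, 'k::field) coalg \<Rightarrow> ('d, 'k) coalg \<Rightarrow> ('c \<Rightarrow> 'd \<Rightarrow> 'k) \<Rightarrow> bool" where
  "coalg_map C D f \<longleftrightarrow>
     (\<forall>c. c \<notin> cb C \<longrightarrow> f c = (\<lambda>_. 0)) \<and>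
     (\<forall>c\<in>cb C. vin (cb D) (f c)) \<and>
     (\<forall>c\<in>cb C. lin (tmap f f) (comult C c) = lin (comult D) (f c)) \<and>
     (\<forall>c\<in>cb C. (\<Sum>y | f c y \<noteq> 0. f c y * counit D y) = counit C c)"

definition yon :: "('d, 'k::field) coalg \<Rightarrow> ('c, 'k) coalg \<Rightarrow> ('c \<Rightarrow> 'd \<Rightarrow> 'k) set" where
  "yon D C = {f. coalg_map C D f}"

text \<open>presheaf action: precomposition x \<circ> f for f : C' \<rightarrow> C\<close>
definition comp :: "('c2 \<Rightarrow> 'c \<Rightarrow> 'k::comm_ring_1) \<Rightarrow> ('c \<Rightarrow> 'd \<Rightarrow> 'k) \<Rightarrow> 'c2 \<Rightarrow> 'd \<Rightarrow> 'k" where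
  "comp f x = (\<lambda>c'. lin x (f c'))"

definition tensor :: "('a, 'k::field) coalg \<Rightarrow> ('b, 'k) coalg \<Rightarrow> ('a \<times> 'b, 'k) coalg" where
  "tensor D1 D2 = \<lparr> cb = cb D1 \<times> cb D2,
     comult = (\<lambda>p q. comult D1 (fst p) (fst (fst q), fst (snd q))
                     * comult D2 (snd p) (snd (fst q), snd (snd q))),
     counit = (\<lambda>p. counit D1 (fst p) * counit D2 (snd p)) \<rparr>"

definition unitC :: "(unit, 'k::field) coalg" where
  "unitC = \<lparr> cb = UNIV, comult = (\<lambda>_ _. 1), counit = (\<lambda>_. 1) \<rparr>"

definition pairing :: "('c, 'k::field) coalg \<Rightarrow> ('c \<Rightarrow> 'a \<Rightarrow> 'k) \<Rightarrow> ('c \<Rightarrow> 'b \<Rightarrow> 'k) \<Rightarrow> 'c \<Rightarrow> 'a \<times> 'b \<Rightarrow> 'k" where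
  "pairing C x1 x2 = (\<lambda>c. lin (tmap x1 x2) (comult C c))"

definition cprod :: "('a, 'k::field) coalg \<Rightarrow> ('b, 'k) coalg \<Rightarrow> ('c, 'k) coalg
                     \<Rightarrow> (('c \<Rightarrow> 'a \<Rightarrow> 'k) \<times> ('c \<Rightarrow> 'b \<Rightarrow> 'k)) set" where
  "cprod D1 D2 C = {(x1, x2). x1 \<in> yon D1 C \<and> x2 \<in> yon D2 C \<and>
     (\<forall>v. vin (cb C) v \<longrightarrow>
        lin (tmap x1 x2) (lin (comult C) v) = lin (tmap x1 x2) (lin (comult C) v \<circ> prod.swap))}"

end

theory Submission
  imports Defs "HOL-Library.Groups_Big_Fun"
begin


definition rf :: "('a \<Rightarrow> 'b \<Rightarrow> 'k::zero) \<Rightarrow> bool" where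
  "rf M \<longleftrightarrow> (\<forall>a. finite {b. M a b \<noteq> 0})"

lemma lin_SA:
  fixes v :: "'a \<Rightarrow> 'k::comm_ring_1"
  assumes "finite {x. v x \<noteq> 0}"
  shows "lin f v y = (\<Sum>x. v x * f x y)"
  unfolding lin_def
  by (rule Sum_any.expand_superset[symmetric]) (use assms in auto)

lemma comp_SA:
  fixes M :: "'a \<Rightarrow> 'b \<Rightarrow> 'k::comm_ring_1"
  assumes "rf M"
  shows "comp M N a y = (\<Sum>x. M a x * N x y)"
  using assms unfolding rf_def comp_def by (simp add: lin_SA)

lemma lin_supp:
  fixes v :: "'a \<Rightarrow> 'k::comm_ring_1"
  assumes "lin f v y \<noteq> 0"
  shows "\<exists>x. v x \<noteq> 0 \<and> f x y \<noteq> 0"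
proof (rule ccontr)
  assume "\<not> ?thesis"
  then have "lin f v y = 0" unfolding lin_def by (auto intro!: sum.neutral)
  with assms show False by simp
qed

lemma lin_fin:
  fixes v :: "'a \<Rightarrow> 'k::comm_ring_1"
  assumes "finite {x. v x \<noteq> 0}" "\<And>x. v x \<noteq> 0 \<Longrightarrow> finite {y. f x y \<noteq> 0}"
  shows "finite {y. lin f v y \<noteq> 0}"
proof -
  have "{y. lin f v y \<noteq> 0} \<subseteq> (\<Union>x\<in>{x. v x \<noteq> 0}. {y. f x y \<noteq> 0})"
    using lin_supp by fastforce
  then show ?thesis by (rule finite_subset) (use assms in auto)
qed

lemma rf_comp: "rf M \<Longrightarrow> rf N \<Longrightarrow> rf (comp M (N :: 'b \<Rightarrow> 'c \<Rightarrow> 'k::comm_ring_1))"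
  unfolding rf_def comp_def by (auto intro: lin_fin)

lemma Sum_any_swap':
  fixes g :: "'a \<Rightarrow> 'b \<Rightarrow> 'k::comm_monoid_add"
  assumes "finite A" "finite B" "\<And>a b. g a b \<noteq> 0 \<Longrightarrow> a \<in> A \<and> b \<in> B"
  shows "(\<Sum>a. \<Sum>b. g a b) = (\<Sum>b. \<Sum>a. g a b)"
  by (rule Sum_any.swap[of "A \<times> B"]) (use assms in auto)

lemma fin_multL: "finite {x. f x \<noteq> (0::'k::mult_zero)} \<Longrightarrow> finite {x. f x * g x \<noteq> 0}"
  by (rule finite_subset[of _ "{x. f x \<noteq> 0}"]) auto
lemma fin_multR: "finite {x. f x \<noteq> (0::'k::mult_zero)} \<Longrightarrow> finite {x. g x * f x \<noteq> 0}"
  by (rule finite_subset[of _ "{x. f x \<noteq> 0}"]) auto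

lemma comp_assoc:
  fixes M :: "'a \<Rightarrow> 'b \<Rightarrow> 'k::comm_ring_1"
  assumes "rf M" "rf N"
  shows "comp (comp M N) P = comp M (comp N P)"
proof (intro ext)
  fix a p
  let ?A = "{x. M a x \<noteq> 0}"
  let ?B = "\<Union>x\<in>?A. {y. N x y \<noteq> 0}"
  have fA: "finite ?A" using assms unfolding rf_def by auto
  have fB: "finite ?B" using assms fA unfolding rf_def by auto
  have "comp (comp M N) P a p = (\<Sum>y. comp M N a y * P y p)"
    using rf_comp[OF assms] by (simp add: comp_SA)
  also have "\<dots> = (\<Sum>y. \<Sum>x. M a x * N x y * P y p)"
  proof (rule Sum_any.cong)
    fix y
    show "comp M N a y * P y p = (\<Sum>x. M a x * N x y * P y p)"
      using assms fA by (simp add: comp_SA Sum_any_left_distrib fin_multL)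
  qed
  also have "\<dots> = (\<Sum>x. \<Sum>y. M a x * N x y * P y p)"
    by (rule Sum_any_swap'[OF fB fA]) (auto dest!: mult_not_zero)
  also have "\<dots> = (\<Sum>x. M a x * comp N P x p)"
  proof (rule Sum_any.cong)
    fix x
    show "(\<Sum>y. M a x * N x y * P y p) = M a x * comp N P x p"
      using assms by (simp add: comp_SA Sum_any_right_distrib fin_multL rf_def mult.assoc)
  qed
  also have "\<dots> = comp M (comp N P) a p" using assms by (simp add: comp_SA)
  finally show "comp (comp M N) P a p = comp M (comp N P) a p" .
qed

lemma rf_tmap: "rf A \<Longrightarrow> rf B \<Longrightarrow> rf (tmap A (B :: 'c \<Rightarrow> 'd \<Rightarrow> 'k::comm_ring_1))"
  unfolding rf_def tmap_def
proof (intro allI)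
  fix p
  assume a: "\<forall>a. finite {b. A a b \<noteq> 0}" "\<forall>a. finite {b. B a b \<noteq> 0}"
  have "{q. A (fst p) (fst q) * B (snd p) (snd q) \<noteq> 0} \<subseteq> {b. A (fst p) b \<noteq> 0} \<times> {b. B (snd p) b \<noteq> 0}"
    by auto
  then show "finite {q. A (fst p) (fst q) * B (snd p) (snd q) \<noteq> 0}"
    by (rule finite_subset) (use a in auto)
qed

lemma SA_product:
  fixes f :: "'b \<Rightarrow> 'a::semiring_0" and g :: "'c \<Rightarrow> 'a"
  assumes "finite {a. f a \<noteq> 0}" and "finite {b. g b \<noteq> 0}"
  shows "Sum_any f * Sum_any g = (\<Sum>a. \<Sum>b. f a * g b)"
proof -
  have "\<forall>a. (\<Sum>b. a * g b) = a * Sum_any g"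
    by (simp add: Sum_any_right_distrib assms(2))
  then show ?thesis
    by (simp add: Sum_any_left_distrib assms(1))
qed

lemma comp_tmap:
  fixes A :: "'a \<Rightarrow> 'x \<Rightarrow> 'k::comm_ring_1" and B :: "'b \<Rightarrow> 'y \<Rightarrow> 'k"
  assumes "rf A" "rf B"
  shows "comp (tmap A B) (tmap P Q) = tmap (comp A P) (comp B Q)"
proof (intro ext, clarify)
  fix a b p q
  have fa: "finite {x. A a x \<noteq> 0}" and fb: "finite {y. B b y \<noteq> 0}"
    using assms unfolding rf_def by auto
  have "comp (tmap A B) (tmap P Q) (a, b) (p, q)
      = (\<Sum>z. A a (fst z) * B b (snd z) * (P (fst z) p * Q (snd z) q))"
    using rf_tmap[OF assms] by (simp add: comp_SA tmap_def)
  also have "\<dots> = (\<Sum>(x, y). (A a x * P x p) * (B b y * Q y q))"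
    by (rule Sum_any.cong) (auto simp: ac_simps)
  also have "\<dots> = (\<Sum>x. \<Sum>y. (A a x * P x p) * (B b y * Q y q))"
    by (rule Sum_any.cartesian_product[symmetric, of "{x. A a x \<noteq> 0} \<times> {y. B b y \<noteq> 0}"])
       (use fa fb in \<open>auto dest!: mult_not_zero\<close>)
  also have "\<dots> = (\<Sum>x. A a x * P x p) * (\<Sum>y. B b y * Q y q)"
    using SA_product[of "\<lambda>x. A a x * P x p" "\<lambda>y. B b y * Q y q"] fa fb
    by (simp add: fin_multL)
  also have "\<dots> = tmap (comp A P) (comp B Q) (a, b) (p, q)"
    using assms by (simp add: comp_SA tmap_def)
  finally show "comp (tmap A B) (tmap P Q) (a, b) (p, q) = tmap (comp A P) (comp B Q) (a, b) (p, q)" .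
qed

lemma idm_ne: "idm a x \<noteq> (0::'k::field) \<longleftrightarrow> x = a"
  by (simp add: idm_def)

lemma rf_idm: "rf (idm :: 'a \<Rightarrow> 'a \<Rightarrow> 'k::field)"
  unfolding rf_def idm_def by auto

lemma lin_idm: "lin N (idm a :: 'a \<Rightarrow> 'k::field) = N a"
proof -
  have "{x. idm a x \<noteq> (0::'k)} = {a}" by (auto simp: idm_def)
  then show ?thesis unfolding lin_def by (simp add: idm_def)
qed

lemma comp_idm_left: "comp (idm :: 'a \<Rightarrow> 'a \<Rightarrow> 'k::field) N = N"
  unfolding comp_def by (simp add: lin_idm)

lemma comp_idm_right:
  fixes M :: "'a \<Rightarrow> 'b \<Rightarrow> 'k::field"
  assumes "rf M" shows "comp M idm = M"
proof (intro ext)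
  fix a y
  have f: "finite {x. M a x \<noteq> 0}" using assms unfolding rf_def by auto
  have "comp M idm a y = (\<Sum>x\<in>{x. M a x \<noteq> 0}. M a x * idm x y)"
    unfolding comp_def lin_def by simp
  also have "\<dots> = M a y"
  proof (cases "M a y = 0")
    case True then show ?thesis by (auto intro!: sum.neutral simp: idm_def)
  next
    case False
    then show ?thesis using f
      by (simp add: idm_def sum.delta'[of _ y "\<lambda>x. M a x"] if_distrib cong: if_cong)
  qed
  finally show "comp M idm a y = M a y" .
qed

lemma idm_pair: "idm (a, b) (c, d) = (idm a c * idm b d :: 'k::field)"
  by (auto simp: idm_def)

lemma lin_reindex:
  fixes v :: "'a \<Rightarrow> 'k::comm_ring_1"
  assumes gh: "\<And>x. g (h x) = x" and hg: "\<And>y. h (g y) = y"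
    and fin: "finite {x. v x \<noteq> 0}"
    and vv: "\<And>x. v' (h x) = v x" and ff: "\<And>x. f' (h x) w' = f x w"
  shows "lin f v w = lin f' v' w'"
proof -
  have b: "bij h" by (rule o_bij[of g]) (auto simp: gh hg)
  have "{y. v' y \<noteq> 0} \<subseteq> h ` {x. v x \<noteq> 0}"
  proof
    fix y assume "y \<in> {y. v' y \<noteq> 0}"
    then have "v (g y) \<noteq> 0" using vv[of "g y"] hg[of y] by simp
    then show "y \<in> h ` {x. v x \<noteq> 0}"
      by (intro image_eqI[of y h "g y"]) (auto simp: hg)
  qed
  then have fin': "finite {y. v' y \<noteq> 0}"
    by (rule finite_subset) (use fin in simp)
  have "lin f' v' w' = (\<Sum>y. v' y * f' y w')" using fin' by (simp add: lin_SA)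
  also have "\<dots> = (\<Sum>x. v x * f x w)"
    by (rule Sum_any.reindex_cong[OF b]) (simp add: vv ff o_def)
  also have "\<dots> = lin f v w" using fin by (simp add: lin_SA)
  finally show ?thesis by simp
qed

lemma lin_lin:
  fixes v :: "'a \<Rightarrow> 'k::comm_ring_1"
  assumes "finite {x. v x \<noteq> 0}" "rf N"
  shows "lin P (lin N v) = lin (comp N P) v"
proof -
  have r: "rf (\<lambda>_::unit. v)" using assms unfolding rf_def by auto
  have "comp (comp (\<lambda>_::unit. v) N) P () = comp (\<lambda>_::unit. v) (comp N P) ()"
    by (simp add: comp_assoc[OF r assms(2)])
  then show ?thesis by (simp add: comp_def)
qed

lemma comp_cong_row:
  "(\<And>x. M a x \<noteq> 0 \<Longrightarrow> N x = N' x) \<Longrightarrow> comp M N a = comp M N' a"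
  unfolding comp_def lin_def by (auto intro!: ext sum.cong)

lemma comp_zero_row: "M a = (\<lambda>_. 0) \<Longrightarrow> comp M N a = (\<lambda>_. (0::'k::comm_ring_1))"
  unfolding comp_def lin_def by auto

lemma lin_cong_pt: "(\<And>x. f x w = f' x w') \<Longrightarrow> lin f v w = lin f' v w'"
  unfolding lin_def by simp

lemma lin_smult_idm: "lin N (\<lambda>x. s * idm a x) y = s * (N a y :: 'k::field)"
proof (cases "s = 0")
  case True then show ?thesis by (simp add: lin_def)
next
  case False
  then have "{x. s * idm a x \<noteq> (0::'k)} = {a}" by (auto simp: idm_def)
  then show ?thesis unfolding lin_def by (simp add: idm_def)
qed

lemma lin_smult_idm': "lin N (\<lambda>x. idm a x * s) y = (N a y :: 'k::field) * s"
  using lin_smult_idm[of N s a y] by (simp add: mult.commute)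

definition E :: "('b, 'k::field) coalg \<Rightarrow> 'b \<Rightarrow> unit \<Rightarrow> 'k" where
  "E D = (\<lambda>y _. counit D y)"
definition LE :: "('b, 'k::field) coalg \<Rightarrow> 'b \<times> 'a \<Rightarrow> 'a \<Rightarrow> 'k" where
  "LE D = (\<lambda>p x. counit D (fst p) * idm (snd p) x)"
definition RE :: "('b, 'k::field) coalg \<Rightarrow> 'a \<times> 'b \<Rightarrow> 'a \<Rightarrow> 'k" where
  "RE D = (\<lambda>p x. idm (fst p) x * counit D (snd p))"

lemma rf_E: "rf (E D)"
  unfolding rf_def by simp
lemma rf_LE: "rf (LE D)"
  unfolding rf_def LE_def
  by (auto intro: finite_subset[of _ "{snd p}" for p] simp: idm_def)
lemma rf_RE: "rf (RE D)"
  unfolding rf_def RE_def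
  by (auto intro: finite_subset[of _ "{fst p}" for p] simp: idm_def)

lemma LE_tmap: "LE D p x = tmap (E D) idm p ((), x)"
  by (simp add: LE_def tmap_def E_def)
lemma RE_tmap: "RE D p x = tmap idm (E D) p (x, ())"
  by (simp add: RE_def tmap_def E_def)

lemma LE_fun: "LE D = (\<lambda>p x. tmap (E D) idm p ((), x))"
  by (intro ext) (simp add: LE_tmap)
lemma RE_fun: "RE D = (\<lambda>p x. tmap idm (E D) p (x, ()))"
  by (intro ext) (simp add: RE_tmap)

lemma comp_col: "comp M (\<lambda>p x. N p (k x)) a x = comp M N a (k x)"
  by (simp add: comp_def lin_def)

lemma pairing_comp: "pairing C x1 x2 = comp (comult C) (tmap x1 x2)"
  by (simp add: pairing_def comp_def)

context
  fixes C :: "('c, 'k::field) coalg"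
  assumes co: "is_coalg C"
begin

lemma co_zero: "c \<notin> cb C \<Longrightarrow> comult C c = (\<lambda>_. 0)"
  using co unfolding is_coalg_def by auto
lemma co_zero_counit: "c \<notin> cb C \<Longrightarrow> counit C c = 0"
  using co unfolding is_coalg_def by auto

lemma rf_comult: "rf (comult C)"
  unfolding rf_def
proof
  fix c show "finite {b. comult C c b \<noteq> 0}"
    using co unfolding is_coalg_def vin_def by (cases "c \<in> cb C") auto
qed

lemma co_assoc:
  "comp (comult C) (tmap (comult C) idm) c ((x, y), z)
   = comp (comult C) (tmap idm (comult C)) c (x, (y, z))"
proof (cases "c \<in> cb C")
  case True then show ?thesis using co unfolding is_coalg_def comp_def by blast
next
  case False then show ?thesis by (simp add: comp_zero_row co_zero)
qed

lemma co_LE: "c \<in> cb C \<Longrightarrow> comp (comult C) (LE C) c = idm c"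
  using co unfolding is_coalg_def comp_def LE_def by (auto intro!: ext)
lemma co_RE: "c \<in> cb C \<Longrightarrow> comp (comult C) (RE C) c = idm c"
  using co unfolding is_coalg_def comp_def RE_def by (auto intro!: ext)

lemma rf_tT: "rf (tmap (comult C) (idm :: 'c \<Rightarrow> 'c \<Rightarrow> 'k))"
  by (intro rf_tmap rf_comult rf_idm)
lemma rf_tT': "rf (tmap (idm :: 'c \<Rightarrow> 'c \<Rightarrow> 'k) (comult C))"
  by (intro rf_tmap rf_comult rf_idm)

lemma PA:
  "pairing C (pairing C Y1 Y2) Y3 c ((p, q), r) = pairing C Y1 (pairing C Y2 Y3) c (p, (q, r))"
proof -
  have L: "pairing C (pairing C Y1 Y2) Y3
      = comp (comp (comult C) (tmap (comult C) idm)) (tmap (tmap Y1 Y2) Y3)"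
  proof -
    have "pairing C (pairing C Y1 Y2) Y3
        = comp (comult C) (tmap (comp (comult C) (tmap Y1 Y2)) (comp idm Y3))"
      by (simp add: pairing_comp comp_idm_left)
    also have "\<dots> = comp (comult C) (comp (tmap (comult C) idm) (tmap (tmap Y1 Y2) Y3))"
      by (simp add: comp_tmap rf_comult rf_idm)
    also have "\<dots> = comp (comp (comult C) (tmap (comult C) idm)) (tmap (tmap Y1 Y2) Y3)"
      by (simp add: comp_assoc rf_comult rf_tT)
    finally show ?thesis .
  qed
  have R: "pairing C Y1 (pairing C Y2 Y3)
      = comp (comp (comult C) (tmap idm (comult C))) (tmap Y1 (tmap Y2 Y3))"
  proof -
    have "pairing C Y1 (pairing C Y2 Y3)
        = comp (comult C) (tmap (comp idm Y1) (comp (comult C) (tmap Y2 Y3)))"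
      by (simp add: pairing_comp comp_idm_left)
    also have "\<dots> = comp (comult C) (comp (tmap idm (comult C)) (tmap Y1 (tmap Y2 Y3)))"
      by (simp add: comp_tmap rf_comult rf_idm)
    also have "\<dots> = comp (comp (comult C) (tmap idm (comult C))) (tmap Y1 (tmap Y2 Y3))"
      by (simp add: comp_assoc rf_comult rf_tT')
    finally show ?thesis .
  qed
  have fin: "finite {x. comp (comult C) (tmap (comult C) idm) c x \<noteq> 0}"
    using rf_comp[OF rf_comult rf_tT] unfolding rf_def by blast
  have fin': "finite {x. lin (tmap (comult C) idm) (comult C c) x \<noteq> 0}"
    using fin by (simp add: comp_def)
  show ?thesis unfolding L R comp_def
    apply (rule lin_reindex[where h = "\<lambda>((a, b), z). (a, (b, z))" and g = "\<lambda>(a, (b, z)). ((a, b), z)"])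
        apply (auto)[2]
      apply (rule fin')
     apply (clarsimp simp: co_assoc[unfolded comp_def])
    apply (clarsimp simp: tmap_def ac_simps)
    done
qed

lemma EL:
  assumes "rf Y" "\<And>c. c \<notin> cb C \<Longrightarrow> Y c = (\<lambda>_. 0)"
  shows "comp (comult C) (tmap (E C) Y) c ((), w) = Y c w"
proof (cases "c \<in> cb C")
  case True
  have fin: "finite {x. comult C c x \<noteq> 0}" using rf_comult unfolding rf_def by blast
  have "comp (comult C) (tmap (E C) Y) c ((), w) = lin (\<lambda>p. lin Y (LE C p)) (comult C c) w"
    unfolding comp_def
    by (rule lin_cong_pt) (simp add: tmap_def E_def LE_def lin_smult_idm)
  also have "\<dots> = lin Y (lin (LE C) (comult C c)) w"
    using lin_lin[OF fin rf_LE, of Y] by (simp add: comp_def)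
  also have "\<dots> = Y c w" using co_LE[OF True] by (simp add: comp_def lin_idm)
  finally show ?thesis .
next
  case False then show ?thesis by (simp add: comp_zero_row co_zero assms)
qed

lemma ER:
  assumes "rf Y" "\<And>c. c \<notin> cb C \<Longrightarrow> Y c = (\<lambda>_. 0)"
  shows "comp (comult C) (tmap Y (E C)) c (w, ()) = Y c w"
proof (cases "c \<in> cb C")
  case True
  have fin: "finite {x. comult C c x \<noteq> 0}" using rf_comult unfolding rf_def by blast
  have "comp (comult C) (tmap Y (E C)) c (w, ()) = lin (\<lambda>p. lin Y (RE C p)) (comult C c) w"
    unfolding comp_def
    by (rule lin_cong_pt) (simp add: tmap_def E_def RE_def lin_smult_idm')
  also have "\<dots> = lin Y (lin (RE C) (comult C c)) w"
    using lin_lin[OF fin rf_RE, of Y] by (simp add: comp_def)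
  also have "\<dots> = Y c w" using co_RE[OF True] by (simp add: comp_def lin_idm)
  finally show ?thesis .
next
  case False then show ?thesis by (simp add: comp_zero_row co_zero assms)
qed

lemma cong1: "(\<And>u. Y u w = Y' u w') \<Longrightarrow> pairing C Y Z c (w, r) = pairing C Y' Z c (w', r)"
  unfolding pairing_def lin_def tmap_def by simp
lemma cong2: "(\<And>u. Z u w = Z' u w') \<Longrightarrow> pairing C Y Z c (r, w) = pairing C Y Z' c (r, w')"
  unfolding pairing_def lin_def tmap_def by simp

lemma lift:
  assumes "rf W" "rf Z"
  shows "comp (pairing C W Z) (tmap N1 N2) = pairing C (comp W N1) (comp Z N2)"
  using assms by (simp add: pairing_comp comp_assoc rf_comult rf_tmap comp_tmap)

lemma liftL2:
  assumes "rf W" "rf Z"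
  shows "comp (pairing C W Z) (tmap N idm) = pairing C (comp W N) Z"
  using assms by (simp add: lift comp_idm_right)

lemma liftR2:
  assumes "rf W" "rf Z"
  shows "comp (pairing C W Z) (tmap idm N) = pairing C W (comp Z N)"
  using assms by (simp add: lift comp_idm_right)

end

lemma yon_D:
  assumes co: "is_coalg C" and x: "x \<in> yon D C"
  shows yon_rf: "rf x"
    and yon_zero: "c \<notin> cb C \<Longrightarrow> x c = (\<lambda>_. 0)"
    and yon_comult: "comp (comult C) (tmap x x) = comp x (comult D)"
    and yon_counit: "comp x (E D) = E C"
proof -
  have m: "coalg_map C D x" using x unfolding yon_def by simp
  show z: "\<And>c. c \<notin> cb C \<Longrightarrow> x c = (\<lambda>_. 0)" using m unfolding coalg_map_def by blast
  show "rf x" unfolding rf_def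
  proof
    fix c show "finite {b. x c b \<noteq> 0}"
      using m z[of c] unfolding coalg_map_def vin_def by (cases "c \<in> cb C") auto
  qed
  show "comp (comult C) (tmap x x) = comp x (comult D)"
  proof
    fix c show "comp (comult C) (tmap x x) c = comp x (comult D) c"
    proof (cases "c \<in> cb C")
      case True then show ?thesis using m unfolding coalg_map_def comp_def by blast
    next
      case False then show ?thesis by (simp add: comp_zero_row co_zero[OF co] z)
    qed
  qed
  show "comp x (E D) = E C"
  proof (intro ext)
    fix c u show "comp x (E D) c u = E C c u"
    proof (cases "c \<in> cb C")
      case True then show ?thesis using m unfolding coalg_map_def comp_def lin_def E_def by auto
    next
      case False then show ?thesis by (simp add: comp_zero_row co_zero_counit[OF co] z E_def)
    qed
  qed
qed

lemma yon_I:
  assumes co: "is_coalg C"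
    and z: "\<And>c. c \<notin> cb C \<Longrightarrow> x c = (\<lambda>_. 0)"
    and v: "\<And>c. c \<in> cb C \<Longrightarrow> vin (cb D) (x c)"
    and m: "comp (comult C) (tmap x x) = comp x (comult D)"
    and e: "comp x (E D) = E C"
  shows "x \<in> yon D C"
  unfolding yon_def coalg_map_def
proof (intro CollectI conjI ballI allI impI)
  fix c assume c: "c \<in> cb C"
  show "vin (cb D) (x c)" using v c .
  show "lin (tmap x x) (comult C c) = lin (comult D) (x c)"
    using fun_cong[OF m, of c] by (simp add: comp_def)
  show "(\<Sum>y | x c y \<noteq> 0. x c y * counit D y) = counit C c"
    using fun_cong[OF fun_cong[OF e, of c], of "()"] by (simp add: comp_def lin_def E_def)
qed (use z in auto)

lemma CL:
  assumes co: "is_coalg C" and y: "y1 \<in> yon D1 C" and Y: "rf Y" "\<And>c. c \<notin> cb C \<Longrightarrow> Y c = (\<lambda>_. 0)"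
  shows "comp (pairing C y1 Y) (LE D1) = Y"
proof (intro ext)
  fix c w
  have "comp (pairing C y1 Y) (LE D1) c w = comp (pairing C y1 Y) (tmap (E D1) idm) c ((), w)"
    unfolding LE_fun by (rule comp_col[where N = "tmap (E D1) idm" and k = "\<lambda>x. ((), x)"])
  also have "\<dots> = comp (comult C) (tmap (E C) Y) c ((), w)"
    by (subst lift[OF co yon_rf[OF co y] Y(1)]) (simp add: comp_idm_right[OF Y(1)] yon_counit[OF co y] pairing_comp)
  also have "\<dots> = Y c w" by (rule EL[OF co Y])
  finally show "comp (pairing C y1 Y) (LE D1) c w = Y c w" .
qed

lemma CR:
  assumes co: "is_coalg C" and y: "y2 \<in> yon D2 C" and Y: "rf Y" "\<And>c. c \<notin> cb C \<Longrightarrow> Y c = (\<lambda>_. 0)"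
  shows "comp (pairing C Y y2) (RE D2) = Y"
proof (intro ext)
  fix c w
  have "comp (pairing C Y y2) (RE D2) c w = comp (pairing C Y y2) (tmap idm (E D2)) c (w, ())"
    unfolding RE_fun by (rule comp_col[where N = "tmap idm (E D2)" and k = "\<lambda>x. (x, ())"])
  also have "\<dots> = comp (comult C) (tmap Y (E C)) c (w, ())"
    by (subst lift[OF co Y(1) yon_rf[OF co y]]) (simp add: comp_idm_right[OF Y(1)] yon_counit[OF co y] pairing_comp)
  also have "\<dots> = Y c w" by (rule ER[OF co Y])
  finally show "comp (pairing C Y y2) (RE D2) c w = Y c w" .
qed



lemma rf_swapcol: "rf M \<Longrightarrow> rf (\<lambda>x. M x \<circ> prod.swap)"
  unfolding rf_def o_def
proof
  fix a assume "\<forall>a. finite {b. M a b \<noteq> 0}"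
  then have "finite (prod.swap -` {b. M a b \<noteq> 0})" by (intro finite_vimageI) auto
  then show "finite {b. M a (prod.swap b) \<noteq> 0}" by (simp add: vimage_def)
qed

lemma pair_swap:
  assumes co: "is_coalg C"
  shows "lin (tmap x1 x2) (comult C c \<circ> prod.swap) (p, q) = pairing C x2 x1 c (q, p)"
proof -
  have fin: "finite {x. comult C c x \<noteq> 0}" using rf_comult[OF co] unfolding rf_def by blast
  show ?thesis unfolding pairing_def
    by (rule lin_reindex[where h = prod.swap and g = prod.swap, OF _ _ fin, symmetric])
       (auto simp: tmap_def mult.commute)
qed

definition Sym :: "('c, 'k::field) coalg \<Rightarrow> ('c \<Rightarrow> 'a \<Rightarrow> 'k) \<Rightarrow> ('c \<Rightarrow> 'b \<Rightarrow> 'k) \<Rightarrow> bool" where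
  "Sym C x1 x2 \<longleftrightarrow> (\<forall>c p q. pairing C x1 x2 c (p, q) = pairing C x2 x1 c (q, p))"

lemma cprod_iff:
  fixes C :: "('c, 'k::field) coalg"
  assumes co: "is_coalg C"
  shows "(x1, x2) \<in> cprod D1 D2 C \<longleftrightarrow> x1 \<in> yon D1 C \<and> x2 \<in> yon D2 C \<and> Sym C x1 x2"
proof
  assume a: "(x1, x2) \<in> cprod D1 D2 C"
  then have y: "x1 \<in> yon D1 C" "x2 \<in> yon D2 C" unfolding cprod_def by auto
  have "pairing C x1 x2 c (p, q) = pairing C x2 x1 c (q, p)" for c p q
  proof (cases "c \<in> cb C")
    case True
    have v: "vin (cb C) (idm c :: 'c \<Rightarrow> 'k)" unfolding vin_def using True by (auto simp: idm_def)
    from a v have "lin (tmap x1 x2) (lin (comult C) (idm c)) = lin (tmap x1 x2) (lin (comult C) (idm c) \<circ> prod.swap)"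
      unfolding cprod_def by auto
    then have "lin (tmap x1 x2) (comult C c) (p, q) = lin (tmap x1 x2) (comult C c \<circ> prod.swap) (p, q)"
      by (simp add: lin_idm)
    then show ?thesis by (simp add: pair_swap[OF co] pairing_def)
  next
    case False then show ?thesis by (simp add: pairing_comp comp_zero_row co_zero[OF co])
  qed
  then show "x1 \<in> yon D1 C \<and> x2 \<in> yon D2 C \<and> Sym C x1 x2" using y unfolding Sym_def by blast
next
  assume a: "x1 \<in> yon D1 C \<and> x2 \<in> yon D2 C \<and> Sym C x1 x2"
  have eq: "comp (\<lambda>x. comult C x \<circ> prod.swap) (tmap x1 x2) = pairing C x1 x2"
  proof (intro ext, clarify)
    fix c p q
    have "comp (\<lambda>x. comult C x \<circ> prod.swap) (tmap x1 x2) c (p, q) = pairing C x2 x1 c (q, p)"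
      by (simp add: comp_def pair_swap[OF co])
    then show "comp (\<lambda>x. comult C x \<circ> prod.swap) (tmap x1 x2) c (p, q) = pairing C x1 x2 c (p, q)"
      using a unfolding Sym_def by simp
  qed
  have "lin (tmap x1 x2) (lin (comult C) v) = lin (tmap x1 x2) (lin (comult C) v \<circ> prod.swap)"
    if v: "vin (cb C) v" for v
  proof -
    have fin: "finite {x. v x \<noteq> 0}" using v unfolding vin_def by simp
    have s: "lin (comult C) v \<circ> prod.swap = lin (\<lambda>x. comult C x \<circ> prod.swap) v"
      by (auto simp: lin_def)
    show ?thesis
      unfolding s lin_lin[OF fin rf_comult[OF co]] lin_lin[OF fin rf_swapcol[OF rf_comult[OF co]]] eq
      by (simp add: pairing_comp)
  qed
  then show "(x1, x2) \<in> cprod D1 D2 C" using a unfolding cprod_def by auto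
qed

lemma yon_supp:
  assumes co: "is_coalg C" and x: "x \<in> yon D C" and nz: "x a y \<noteq> 0"
  shows "a \<in> cb C \<and> y \<in> cb D"
proof -
  have a: "a \<in> cb C"
  proof (rule ccontr)
    assume "a \<notin> cb C"
    then have "x a y = 0" using yon_zero[OF co x] by simp
    with nz show False by simp
  qed
  moreover have "vin (cb D) (x a)" using x a unfolding yon_def coalg_map_def by auto
  ultimately show ?thesis using nz unfolding vin_def by auto
qed

lemma comp_yon:
  fixes C :: "('c, 'k::field) coalg" and C' :: "('c2, 'k) coalg"
  assumes co: "is_coalg C" and co': "is_coalg C'" and f: "f \<in> yon C C'" and x: "x \<in> yon D C"
  shows "comp f x \<in> yon D C'"
proof (rule yon_I[OF co'])
  fix c assume "c \<notin> cb C'"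
  then show "comp f x c = (\<lambda>_. 0)" by (simp add: comp_zero_row yon_zero[OF co' f])
next
  fix c assume c: "c \<in> cb C'"
  have fin: "finite {a. f c a \<noteq> 0}" using yon_rf[OF co' f] unfolding rf_def by blast
  have "finite {y. comp f x c y \<noteq> 0}" unfolding comp_def
    by (rule lin_fin[OF fin]) (use yon_rf[OF co x] in \<open>auto simp: rf_def\<close>)
  moreover have "{y. comp f x c y \<noteq> 0} \<subseteq> cb D"
  proof
    fix y assume "y \<in> {y. comp f x c y \<noteq> 0}"
    then obtain a where "f c a \<noteq> 0" "x a y \<noteq> 0" unfolding comp_def using lin_supp by fastforce
    then show "y \<in> cb D" using yon_supp[OF co x] by blast
  qed
  ultimately show "vin (cb D) (comp f x c)" unfolding vin_def by simp
next
  have rff: "rf f" and rfx: "rf x" using yon_rf[OF co' f] yon_rf[OF co x] .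
  show "comp (comult C') (tmap (comp f x) (comp f x)) = comp (comp f x) (comult D)"
    by (simp add: comp_tmap[OF rff rff, symmetric] comp_assoc[OF rf_comult[OF co'] rf_tmap[OF rff rff], symmetric]
        yon_comult[OF co' f] comp_assoc[OF rff rf_comult[OF co]] yon_comult[OF co x] comp_assoc[OF rff rfx])
next
  have rff: "rf f" and rfx: "rf x" using yon_rf[OF co' f] yon_rf[OF co x] .
  show "comp (comp f x) (E D) = E C'"
    by (simp add: comp_assoc[OF rff rfx] yon_counit[OF co x] yon_counit[OF co' f])
qed

lemma natural:
  fixes C :: "('c, 'k::field) coalg" and C' :: "('c2, 'k) coalg"
  assumes co: "is_coalg C" and co': "is_coalg C'" and f: "f \<in> yon C C'" and r: "rf x1" "rf x2"
  shows "pairing C' (comp f x1) (comp f x2) = comp f (pairing C x1 x2)"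
proof -
  have rff: "rf f" using yon_rf[OF co' f] .
  show ?thesis
    by (simp add: pairing_comp comp_tmap[OF rff rff, symmetric] comp_assoc[OF rf_comult[OF co'] rf_tmap[OF rff rff], symmetric]
        yon_comult[OF co' f] comp_assoc[OF rff rf_comult[OF co]])
qed

lemma Sym_comp:
  fixes C :: "('c, 'k::field) coalg" and C' :: "('c2, 'k) coalg"
  assumes co: "is_coalg C" and co': "is_coalg C'" and f: "f \<in> yon C C'" and r: "rf x1" "rf x2"
    and s: "Sym C x1 x2"
  shows "Sym C' (comp f x1) (comp f x2)"
  unfolding Sym_def natural[OF co co' f r] natural[OF co co' f r(2) r(1)]
proof (intro allI)
  fix c p q
  show "comp f (pairing C x1 x2) c (p, q) = comp f (pairing C x2 x1) c (q, p)"
    unfolding comp_def by (rule lin_cong_pt) (use s in \<open>simp add: Sym_def\<close>)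
qed

lemma four_mid:
  assumes co: "is_coalg C"
  shows "pairing C (pairing C Y1 Y2) (pairing C Y3 Y4) c ((a1, a2), (b1, b2))
       = pairing C Y1 (pairing C (pairing C Y2 Y3) Y4) c (a1, ((a2, b1), b2))"
  unfolding PA[OF co] by (rule cong2[OF co]) (simp add: PA[OF co])

lemma tensor_comult: "comult (tensor D1 D2) = (\<lambda>p q. tmap (comult D1) (comult D2) p ((fst (fst q), fst (snd q)), (snd (fst q), snd (snd q))))"
  by (intro ext) (simp add: tensor_def tmap_def)

lemma tensor_E: "E (tensor D1 D2) = (\<lambda>p u. tmap (E D1) (E D2) p ((), ()))"
  by (intro ext) (simp add: tensor_def tmap_def E_def)

lemma E_zero: "is_coalg C \<Longrightarrow> c \<notin> cb C \<Longrightarrow> E C c = (\<lambda>_. 0)"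
  by (auto simp: E_def co_zero_counit)

lemma pair_yon:
  fixes C :: "('c, 'k::field) coalg"
  assumes co: "is_coalg C" and x1: "x1 \<in> yon D1 C" and x2: "x2 \<in> yon D2 C" and s: "Sym C x1 x2"
  shows "pairing C x1 x2 \<in> yon (tensor D1 D2) C"
proof (rule yon_I[OF co])
  have r1: "rf x1" and r2: "rf x2" using yon_rf[OF co x1] yon_rf[OF co x2] .
  fix c
  { assume "c \<notin> cb C"
    then show "pairing C x1 x2 c = (\<lambda>_. 0)" by (simp add: pairing_comp comp_zero_row co_zero[OF co]) }
  { assume c: "c \<in> cb C"
    have fin: "finite {a. comult C c a \<noteq> 0}" using rf_comult[OF co] unfolding rf_def by blast
    have "finite {y. pairing C x1 x2 c y \<noteq> 0}" unfolding pairing_def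
      by (rule lin_fin[OF fin]) (use rf_tmap[OF r1 r2] in \<open>auto simp: rf_def\<close>)
    moreover have "{y. pairing C x1 x2 c y \<noteq> 0} \<subseteq> cb (tensor D1 D2)"
    proof
      fix y assume "y \<in> {y. pairing C x1 x2 c y \<noteq> 0}"
      then obtain ab where "tmap x1 x2 ab y \<noteq> 0" unfolding pairing_def using lin_supp by fastforce
      then have "x1 (fst ab) (fst y) \<noteq> 0" "x2 (snd ab) (snd y) \<noteq> 0" by (auto simp: tmap_def)
      then show "y \<in> cb (tensor D1 D2)" using yon_supp[OF co x1] yon_supp[OF co x2]
        by (cases y) (auto simp: tensor_def)
    qed
    ultimately show "vin (cb (tensor D1 D2)) (pairing C x1 x2 c)" unfolding vin_def by simp }
next
  have r1: "rf x1" and r2: "rf x2" using yon_rf[OF co x1] yon_rf[OF co x2] .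
  have R: "comp (pairing C x1 x2) (tmap (comult D1) (comult D2))
      = pairing C (pairing C x1 x1) (pairing C x2 x2)"
    by (simp add: pairing_comp comp_assoc[OF rf_comult[OF co] rf_tmap[OF r1 r2]] comp_tmap[OF r1 r2]
        yon_comult[OF co x1, symmetric] yon_comult[OF co x2, symmetric])
  show "comp (comult C) (tmap (pairing C x1 x2) (pairing C x1 x2)) = comp (pairing C x1 x2) (comult (tensor D1 D2))"
  proof (intro ext, clarify)
    fix c a1 a2 b1 b2
    have "comp (pairing C x1 x2) (comult (tensor D1 D2)) c ((a1, a2), b1, b2)
        = pairing C (pairing C x1 x1) (pairing C x2 x2) c ((a1, b1), (a2, b2))"
      unfolding tensor_comult comp_col[where k = "\<lambda>q. ((fst (fst q), fst (snd q)), (snd (fst q), snd (snd q)))"] R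
      by simp
    also have "\<dots> = pairing C x1 (pairing C (pairing C x1 x2) x2) c (a1, ((b1, a2), b2))"
      by (rule four_mid[OF co])
    also have "\<dots> = pairing C x1 (pairing C (pairing C x2 x1) x2) c (a1, ((a2, b1), b2))"
      by (rule cong2[OF co], rule cong1[OF co]) (use s in \<open>simp add: Sym_def\<close>)
    also have "\<dots> = pairing C (pairing C x1 x2) (pairing C x1 x2) c ((a1, a2), (b1, b2))"
      by (rule four_mid[OF co, symmetric])
    finally show "comp (comult C) (tmap (pairing C x1 x2) (pairing C x1 x2)) c ((a1, a2), b1, b2)
       = comp (pairing C x1 x2) (comult (tensor D1 D2)) c ((a1, a2), b1, b2)"
      by (simp add: pairing_comp)
  qed
next
  have r1: "rf x1" and r2: "rf x2" using yon_rf[OF co x1] yon_rf[OF co x2] .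
  show "comp (pairing C x1 x2) (E (tensor D1 D2)) = E C"
  proof (intro ext)
    fix c u
    have "comp (pairing C x1 x2) (E (tensor D1 D2)) c u = comp (pairing C x1 x2) (tmap (E D1) (E D2)) c ((), ())"
      unfolding tensor_E by (rule comp_col[where k = "\<lambda>_. ((), ())"])
    also have "\<dots> = comp (comult C) (tmap (E C) (E C)) c ((), ())"
      by (simp add: pairing_comp comp_assoc[OF rf_comult[OF co] rf_tmap[OF r1 r2]] comp_tmap[OF r1 r2]
        yon_counit[OF co x1] yon_counit[OF co x2])
    also have "\<dots> = E C c ()" by (rule EL[OF co rf_E E_zero[OF co]])
    finally show "comp (pairing C x1 x2) (E (tensor D1 D2)) c u = E C c u" by simp
  qed
qed

lemma lin_cong_supp: "(\<And>x. v x \<noteq> 0 \<Longrightarrow> f x w = f' x w') \<Longrightarrow> lin f v w = lin f' v w'"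
  unfolding lin_def by (auto intro!: sum.cong)

definition sh :: "('a \<times> 'b) \<times> ('c \<times> 'd) \<Rightarrow> ('a \<times> 'c) \<times> ('b \<times> 'd)" where
  "sh q = ((fst (fst q), fst (snd q)), (snd (fst q), snd (snd q)))"

lemma tmap_apply: "tmap A B (a, b) (p, q) = A a p * B b q"
  by (simp add: tmap_def)

lemma tensor_lin:
  fixes D1 :: "('d1, 'k::field) coalg" and D2 :: "('d2, 'k) coalg"
  assumes co1: "is_coalg D1" and co2: "is_coalg D2"
    and ff: "\<And>a1 a2 b1 b2. f ((a1, a2), (b1, b2)) w = f' ((a1, b1), (a2, b2)) w'"
  shows "comp (comult (tensor D1 D2)) f d w = comp (tmap (comult D1) (comult D2)) f' d w'"
proof -
  have fin: "finite {x. tmap (comult D1) (comult D2) d x \<noteq> 0}"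
    using spec[OF rf_tmap[OF rf_comult[OF co1] rf_comult[OF co2], unfolded rf_def], of d] .
  show ?thesis unfolding comp_def
    by (rule lin_reindex[where h = sh and g = sh, OF _ _ fin, symmetric])
       (auto simp: sh_def tensor_comult ff)
qed

lemma rf_tensor:
  assumes co1: "is_coalg D1" and co2: "is_coalg D2"
  shows "rf (comult (tensor D1 D2))"
  unfolding rf_def
proof
  fix d
  have "finite {x. tmap (comult D1) (comult D2) d x \<noteq> 0}"
    using spec[OF rf_tmap[OF rf_comult[OF co1] rf_comult[OF co2], unfolded rf_def], of d] .
  then have "finite (sh -` {x. tmap (comult D1) (comult D2) d x \<noteq> 0})"
    by (rule finite_vimageI) (auto simp: inj_def sh_def prod_eq_iff)
  then show "finite {b. comult (tensor D1 D2) d b \<noteq> 0}"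
    by (simp add: vimage_def tensor_comult sh_def)
qed

context
  fixes D1 :: "('d1, 'k::field) coalg" and D2 :: "('d2, 'k) coalg"
  assumes co1: "is_coalg D1" and co2: "is_coalg D2"
begin

lemma K1: "comp (comult (tensor D1 D2)) (tmap (RE D2) (RE D2)) = comp (RE D2) (comult D1)"
proof (intro ext, clarify)
  fix d1 d2 a b
  have "comp (comult (tensor D1 D2)) (tmap (RE D2) (RE D2)) (d1, d2) (a, b)
      = comp (tmap (comult D1) (comult D2)) (tmap idm (tmap (E D2) (E D2))) (d1, d2) ((a, b), ((), ()))"
    by (rule tensor_lin[OF co1 co2]) (simp add: tmap_def RE_def E_def idm_pair)
  also have "\<dots> = comult D1 d1 (a, b) * E D2 d2 ()"
    by (simp only: comp_tmap[OF rf_comult[OF co1] rf_comult[OF co2]])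
       (simp add: comp_idm_right rf_comult co1 co2 tmap_apply EL[OF co2 rf_E E_zero[OF co2]])
  also have "\<dots> = comp (RE D2) (comult D1) (d1, d2) (a, b)"
    by (simp add: comp_def RE_def lin_smult_idm' E_def)
  finally show "comp (comult (tensor D1 D2)) (tmap (RE D2) (RE D2)) (d1, d2) (a, b) = comp (RE D2) (comult D1) (d1, d2) (a, b)" .
qed

lemma K2: "comp (comult (tensor D1 D2)) (tmap (LE D1) (LE D1)) = comp (LE D1) (comult D2)"
proof (intro ext, clarify)
  fix d1 d2 a b
  have "comp (comult (tensor D1 D2)) (tmap (LE D1) (LE D1)) (d1, d2) (a, b)
      = comp (tmap (comult D1) (comult D2)) (tmap (tmap (E D1) (E D1)) idm) (d1, d2) (((), ()), (a, b))"
    by (rule tensor_lin[OF co1 co2]) (simp add: tmap_def LE_def E_def idm_pair)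
  also have "\<dots> = E D1 d1 () * comult D2 d2 (a, b)"
    by (simp only: comp_tmap[OF rf_comult[OF co1] rf_comult[OF co2]])
       (simp add: comp_idm_right rf_comult co1 co2 tmap_apply EL[OF co1 rf_E E_zero[OF co1]])
  also have "\<dots> = comp (LE D1) (comult D2) (d1, d2) (a, b)"
    by (simp add: comp_def LE_def lin_smult_idm E_def)
  finally show "comp (comult (tensor D1 D2)) (tmap (LE D1) (LE D1)) (d1, d2) (a, b) = comp (LE D1) (comult D2) (d1, d2) (a, b)" .
qed

lemma K3:
  assumes "d1 \<in> cb D1" "d2 \<in> cb D2"
  shows "comp (comult (tensor D1 D2)) (tmap (RE D2) (LE D1)) (d1, d2) (p, q) = idm (d1, d2) (p, q)"
proof -
  have "comp (comult (tensor D1 D2)) (tmap (RE D2) (LE D1)) (d1, d2) (p, q)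
      = comp (tmap (comult D1) (comult D2)) (tmap (RE D1) (LE D2)) (d1, d2) (p, q)"
    by (rule tensor_lin[OF co1 co2]) (simp add: tmap_def RE_def LE_def ac_simps)
  also have "\<dots> = idm (d1, d2) (p, q)"
    by (simp only: comp_tmap[OF rf_comult[OF co1] rf_comult[OF co2]])
       (simp add: tmap_def co_RE[OF co1 assms(1)] co_LE[OF co2 assms(2)] idm_pair)
  finally show ?thesis .
qed

lemma K4:
  assumes "d1 \<in> cb D1" "d2 \<in> cb D2"
  shows "comp (comult (tensor D1 D2)) (tmap (LE D1) (RE D2)) (d1, d2) (q, p) = idm (d1, d2) (p, q)"
proof -
  have "comp (comult (tensor D1 D2)) (tmap (LE D1) (RE D2)) (d1, d2) (q, p)
      = comp (tmap (comult D1) (comult D2)) (tmap (LE D1) (RE D2)) (d1, d2) (p, q)"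
    by (rule tensor_lin[OF co1 co2]) (simp add: tmap_def RE_def LE_def ac_simps)
  also have "\<dots> = idm (d1, d2) (p, q)"
    by (simp only: comp_tmap[OF rf_comult[OF co1] rf_comult[OF co2]])
       (simp add: tmap_def co_LE[OF co1 assms(1)] co_RE[OF co2 assms(2)] idm_pair)
  finally show ?thesis .
qed

lemma K5: "comp (RE D2) (E D1) = E (tensor D1 D2)" "comp (LE D1) (E D2) = E (tensor D1 D2)"
  by (auto intro!: ext simp: comp_def RE_def LE_def lin_smult_idm lin_smult_idm' E_def tensor_def)

end

lemma GG:
  fixes C :: "('c, 'k::field) coalg" and D1 :: "('d1, 'k) coalg" and D2 :: "('d2, 'k) coalg"
  assumes co: "is_coalg C" and co1: "is_coalg D1" and co2: "is_coalg D2"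
    and g: "g \<in> yon (tensor D1 D2) C"
  shows "comp (comult C) (tmap (comp g N1) (comp g N2)) = comp g (comp (comult (tensor D1 D2)) (tmap N1 N2))"
proof -
  have rg: "rf g" using yon_rf[OF co g] .
  show ?thesis
    by (simp add: comp_tmap[OF rg rg, symmetric] comp_assoc[OF rf_comult[OF co] rf_tmap[OF rg rg], symmetric]
        yon_comult[OF co g] comp_assoc[OF rg rf_tensor[OF co1 co2]])
qed

lemma proj_yon:
  fixes C :: "('c, 'k::field) coalg" and D1 :: "('d1, 'k) coalg" and D2 :: "('d2, 'k) coalg"
  assumes co: "is_coalg C" and co1: "is_coalg D1" and co2: "is_coalg D2"
    and g: "g \<in> yon (tensor D1 D2) C"
  shows "comp g (RE D2) \<in> yon D1 C" "comp g (LE D1) \<in> yon D2 C"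
proof -
  have rg: "rf g" using yon_rf[OF co g] .
  have fin: "finite {y. comp g N c y \<noteq> 0}" if "rf N" for N :: "'d1 \<times> 'd2 \<Rightarrow> 'x \<Rightarrow> 'k" and c
    unfolding comp_def
    by (rule lin_fin) (use rg that in \<open>auto simp: rf_def\<close>)
  show "comp g (RE D2) \<in> yon D1 C"
  proof (rule yon_I[OF co])
    fix c assume "c \<notin> cb C"
    then show "comp g (RE D2) c = (\<lambda>_. 0)" by (simp add: comp_zero_row yon_zero[OF co g])
  next
    fix c assume c: "c \<in> cb C"
    have "{y. comp g (RE D2) c y \<noteq> 0} \<subseteq> cb D1"
    proof
      fix y assume "y \<in> {y. comp g (RE D2) c y \<noteq> 0}"
      then obtain d where d: "g c d \<noteq> 0" "RE D2 d y \<noteq> 0" unfolding comp_def using lin_supp by fastforce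
      then have "y = fst d" by (auto simp: RE_def idm_def split: if_splits)
      then show "y \<in> cb D1" using yon_supp[OF co g d(1)] by (auto simp: tensor_def)
    qed
    then show "vin (cb D1) (comp g (RE D2) c)" using fin[OF rf_RE] unfolding vin_def by simp
  next
    show "comp (comult C) (tmap (comp g (RE D2)) (comp g (RE D2))) = comp (comp g (RE D2)) (comult D1)"
      by (simp add: GG[OF co co1 co2 g] K1[OF co1 co2] comp_assoc[OF rg rf_RE])
  next
    show "comp (comp g (RE D2)) (E D1) = E C"
      by (simp add: comp_assoc[OF rg rf_RE] K5[OF co1 co2] yon_counit[OF co g])
  qed
  show "comp g (LE D1) \<in> yon D2 C"
  proof (rule yon_I[OF co])
    fix c assume "c \<notin> cb C"
    then show "comp g (LE D1) c = (\<lambda>_. 0)" by (simp add: comp_zero_row yon_zero[OF co g])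
  next
    fix c assume c: "c \<in> cb C"
    have "{y. comp g (LE D1) c y \<noteq> 0} \<subseteq> cb D2"
    proof
      fix y assume "y \<in> {y. comp g (LE D1) c y \<noteq> 0}"
      then obtain d where d: "g c d \<noteq> 0" "LE D1 d y \<noteq> 0" unfolding comp_def using lin_supp by fastforce
      then have "y = snd d" by (auto simp: LE_def idm_def split: if_splits)
      then show "y \<in> cb D2" using yon_supp[OF co g d(1)] by (auto simp: tensor_def)
    qed
    then show "vin (cb D2) (comp g (LE D1) c)" using fin[OF rf_LE] unfolding vin_def by simp
  next
    show "comp (comult C) (tmap (comp g (LE D1)) (comp g (LE D1))) = comp (comp g (LE D1)) (comult D2)"
      by (simp add: GG[OF co co1 co2 g] K2[OF co1 co2] comp_assoc[OF rg rf_LE])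
  next
    show "comp (comp g (LE D1)) (E D2) = E C"
      by (simp add: comp_assoc[OF rg rf_LE] K5[OF co1 co2] yon_counit[OF co g])
  qed
qed

lemma proj_pair:
  fixes C :: "('c, 'k::field) coalg" and D1 :: "('d1, 'k) coalg" and D2 :: "('d2, 'k) coalg"
  assumes co: "is_coalg C" and co1: "is_coalg D1" and co2: "is_coalg D2"
    and g: "g \<in> yon (tensor D1 D2) C"
  shows "pairing C (comp g (RE D2)) (comp g (LE D1)) = g"
    and "Sym C (comp g (RE D2)) (comp g (LE D1))"
proof -
  have rg: "rf g" using yon_rf[OF co g] .
  have A: "pairing C (comp g (RE D2)) (comp g (LE D1)) c (p, q) = g c (p, q)" for c p q
  proof -
    have "pairing C (comp g (RE D2)) (comp g (LE D1)) c (p, q)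
        = lin (comp (comult (tensor D1 D2)) (tmap (RE D2) (LE D1))) (g c) (p, q)"
      by (simp only: pairing_comp GG[OF co co1 co2 g]) (simp add: comp_def)
    also have "\<dots> = lin idm (g c) (p, q)"
    proof (rule lin_cong_supp)
      fix d assume "g c d \<noteq> 0"
      then have "d \<in> cb D1 \<times> cb D2" using yon_supp[OF co g] by (auto simp: tensor_def)
      then show "comp (comult (tensor D1 D2)) (tmap (RE D2) (LE D1)) d (p, q) = idm d (p, q)"
        by (cases d) (simp add: K3[OF co1 co2])
    qed
    also have "\<dots> = g c (p, q)" using fun_cong[OF fun_cong[OF comp_idm_right[OF rg], of c], of "(p, q)"]
      by (simp add: comp_def)
    finally show ?thesis .
  qed
  have B: "pairing C (comp g (LE D1)) (comp g (RE D2)) c (q, p) = g c (p, q)" for c p q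
  proof -
    have "pairing C (comp g (LE D1)) (comp g (RE D2)) c (q, p)
        = lin (comp (comult (tensor D1 D2)) (tmap (LE D1) (RE D2))) (g c) (q, p)"
      by (simp only: pairing_comp GG[OF co co1 co2 g]) (simp add: comp_def)
    also have "\<dots> = lin idm (g c) (p, q)"
    proof (rule lin_cong_supp)
      fix d assume "g c d \<noteq> 0"
      then have "d \<in> cb D1 \<times> cb D2" using yon_supp[OF co g] by (auto simp: tensor_def)
      then show "comp (comult (tensor D1 D2)) (tmap (LE D1) (RE D2)) d (q, p) = idm d (p, q)"
        by (cases d) (simp add: K4[OF co1 co2])
    qed
    also have "\<dots> = g c (p, q)" using fun_cong[OF fun_cong[OF comp_idm_right[OF rg], of c], of "(p, q)"]
      by (simp add: comp_def)
    finally show ?thesis .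
  qed
  show "pairing C (comp g (RE D2)) (comp g (LE D1)) = g"
    using A by (intro ext) auto
  show "Sym C (comp g (RE D2)) (comp g (LE D1))"
    unfolding Sym_def using A B by simp
qed

lemma yon_unit:
  fixes C :: "('c, 'k::field) coalg"
  assumes co: "is_coalg C" and x: "x \<in> yon (unitC :: (unit, 'k) coalg) C"
  shows "x = E C"
proof (intro ext)
  fix c and u :: unit
  show "x c u = E C c u"
  proof (cases "c \<in> cb C")
    case True
    then have s: "(\<Sum>y | x c y \<noteq> 0. x c y * counit (unitC :: (unit, 'k) coalg) y) = counit C c"
      using x unfolding yon_def coalg_map_def by blast
    have "(\<Sum>y | x c y \<noteq> 0. x c y * counit (unitC :: (unit, 'k) coalg) y) = x c ()"
    proof (cases "x c () = 0")
      case True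
      then have "{y. x c y \<noteq> 0} = {}" by auto
      then show ?thesis using True by simp
    next
      case False
      then have "{y. x c y \<noteq> 0} = {()}" by auto
      then show ?thesis by (simp add: unitC_def)
    qed
    then show ?thesis using s by (simp add: E_def)
  next
    case False then show ?thesis by (simp add: yon_zero[OF co x] E_zero[OF co])
  qed
qed

lemma Sym_unit:
  fixes C :: "('c, 'k::field) coalg"
  assumes co: "is_coalg C" and x: "x \<in> yon D C"
  shows "Sym C (E C) x" "Sym C x (E C)"
proof -
  have r: "rf x" "\<And>c. c \<notin> cb C \<Longrightarrow> x c = (\<lambda>_. 0)" using yon_rf[OF co x] yon_zero[OF co x] by auto
  have a: "pairing C (E C) x c ((), q) = x c q" for c q
    by (simp add: pairing_comp EL[OF co r])
  have b: "pairing C x (E C) c (q, ()) = x c q" for c q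
    by (simp add: pairing_comp ER[OF co r])
  show "Sym C (E C) x" "Sym C x (E C)" unfolding Sym_def using a b by auto
qed

lemma pair_rf: "is_coalg C \<Longrightarrow> rf Y \<Longrightarrow> rf Z \<Longrightarrow> rf (pairing C Y Z)"
  unfolding pairing_comp by (intro rf_comp rf_comult rf_tmap)

lemma pair_zero: "is_coalg C \<Longrightarrow> c \<notin> cb C \<Longrightarrow> pairing C Y Z c = (\<lambda>_. 0)"
  by (simp add: pairing_comp comp_zero_row co_zero)

lemma rf_fin: "rf M \<Longrightarrow> finite {x. M a x \<noteq> 0}"
  unfolding rf_def by blast

lemma assoc_main:
  fixes C :: "('c, 'k::field) coalg" and D1 :: "('d1, 'k) coalg" and D2 :: "('d2, 'k) coalg"
    and D3 :: "('d3, 'k) coalg"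
  assumes co: "is_coalg C"
    and x1: "x1 \<in> yon D1 C" and x2: "x2 \<in> yon D2 C" and x3: "x3 \<in> yon D3 C"
  shows "(Sym C x1 x2 \<and> Sym C (pairing C x1 x2) x3) \<longleftrightarrow> (Sym C x2 x3 \<and> Sym C x1 (pairing C x2 x3))"
proof -
  have r1: "rf x1" and r2: "rf x2" and r3: "rf x3"
    using yon_rf[OF co x1] yon_rf[OF co x2] yon_rf[OF co x3] .
  have z1: "\<And>c. c \<notin> cb C \<Longrightarrow> x1 c = (\<lambda>_. 0)" using yon_zero[OF co x1] .
  have z2: "\<And>c. c \<notin> cb C \<Longrightarrow> x2 c = (\<lambda>_. 0)" using yon_zero[OF co x2] .
  have z3: "\<And>c. c \<notin> cb C \<Longrightarrow> x3 c = (\<lambda>_. 0)" using yon_zero[OF co x3] .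
  have rp: "\<And>Y Z. rf Y \<Longrightarrow> rf Z \<Longrightarrow> rf (pairing C Y Z)" using pair_rf[OF co] .
  have zp: "\<And>Y Z c. c \<notin> cb C \<Longrightarrow> pairing C Y Z c = (\<lambda>_. 0)" using pair_zero[OF co] .
  note PA = PA[OF co]
  show ?thesis
  proof
    assume A: "Sym C x1 x2 \<and> Sym C (pairing C x1 x2) x3"
    have S12: "\<And>c p q. pairing C x1 x2 c (p, q) = pairing C x2 x1 c (q, p)"
      using A unfolding Sym_def by blast
    have H: "\<And>c w r. pairing C (pairing C x1 x2) x3 c (w, r) = pairing C x3 (pairing C x1 x2) c (r, w)"
      using A unfolding Sym_def by blast
    have S13: "pairing C x1 x3 c (p, r) = pairing C x3 x1 c (r, p)" for c p r
    proof -
      have "pairing C x1 x3 c (p, r) = pairing C (comp (pairing C x1 x2) (RE D2)) x3 c (p, r)"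
        by (simp add: CR[OF co x2 r1 z1])
      also have "\<dots> = lin (tmap (RE D2) idm) (pairing C (pairing C x1 x2) x3 c) (p, r)"
        by (subst liftL2[OF co rp[OF r1 r2] r3, symmetric]) (simp add: comp_def)
      also have "\<dots> = lin (RE D2) (pairing C (pairing C x3 x1) x2 c) (r, p)"
        apply (rule lin_reindex[where h = "\<lambda>((p, q), r). ((r, p), q)" and g = "\<lambda>((r, p), q). ((p, q), r)"])
            apply auto[2]
          apply (rule rf_fin[OF rp[OF rp[OF r1 r2] r3]])
         apply (clarsimp simp: PA[of x3 x1 x2] H[symmetric])
        apply (clarsimp simp: split_paired_all tmap_def RE_def idm_pair ac_simps)
        done
      also have "\<dots> = pairing C x3 x1 c (r, p)"
        using fun_cong[OF fun_cong[OF CR[OF co x2 rp[OF r3 r1] zp]]] by (simp add: comp_def)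
      finally show ?thesis .
    qed
    have S23: "pairing C x2 x3 c (q, r) = pairing C x3 x2 c (r, q)" for c q r
    proof -
      have "pairing C x2 x3 c (q, r) = lin (LE D1) (pairing C x1 (pairing C x2 x3) c) (q, r)"
        using fun_cong[OF fun_cong[OF CL[OF co x1 rp[OF r2 r3] zp]]] by (simp add: comp_def)
      also have "\<dots> = lin (tmap (RE D1) idm) (pairing C (pairing C x3 x1) x2 c) (r, q)"
        apply (rule lin_reindex[where h = "\<lambda>(p, (q, r)). ((r, p), q)" and g = "\<lambda>((r, p), q). (p, (q, r))"])
            apply auto[2]
          apply (rule rf_fin[OF rp[OF r1 rp[OF r2 r3]]])
         apply (clarsimp simp: PA[of x3 x1 x2] H[symmetric] PA[of x1 x2 x3])
        apply (clarsimp simp: split_paired_all tmap_def RE_def LE_def idm_pair ac_simps)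
        done
      also have "\<dots> = pairing C (comp (pairing C x3 x1) (RE D1)) x2 c (r, q)"
        by (subst liftL2[OF co rp[OF r3 r1] r2, symmetric]) (simp add: comp_def)
      also have "\<dots> = pairing C x3 x2 c (r, q)"
        by (simp add: CR[OF co x1 r3 z3])
      finally show ?thesis .
    qed
    have S1: "pairing C x1 (pairing C x2 x3) c (p, w) = pairing C (pairing C x2 x3) x1 c (w, p)" for c p w
    proof (cases w)
      case (Pair q r)
      have "pairing C x1 (pairing C x2 x3) c (p, (q, r)) = pairing C (pairing C x1 x2) x3 c ((p, q), r)"
        by (simp add: PA)
      also have "\<dots> = pairing C (pairing C x2 x1) x3 c ((q, p), r)"
        by (rule cong1[OF co]) (simp add: S12)
      also have "\<dots> = pairing C x2 (pairing C x1 x3) c (q, (p, r))" by (simp add: PA)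
      also have "\<dots> = pairing C x2 (pairing C x3 x1) c (q, (r, p))"
        by (rule cong2[OF co]) (simp add: S13)
      also have "\<dots> = pairing C (pairing C x2 x3) x1 c ((q, r), p)" by (simp add: PA)
      finally show ?thesis using Pair by simp
    qed
    show "Sym C x2 x3 \<and> Sym C x1 (pairing C x2 x3)"
      unfolding Sym_def using S23 S1 by blast
  next
    assume B: "Sym C x2 x3 \<and> Sym C x1 (pairing C x2 x3)"
    have S23: "\<And>c q r. pairing C x2 x3 c (q, r) = pairing C x3 x2 c (r, q)"
      using B unfolding Sym_def by blast
    have H: "\<And>c p w. pairing C x1 (pairing C x2 x3) c (p, w) = pairing C (pairing C x2 x3) x1 c (w, p)"
      using B unfolding Sym_def by blast
    have S12: "pairing C x1 x2 c (p, q) = pairing C x2 x1 c (q, p)" for c p q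
    proof -
      have "pairing C x1 x2 c (p, q) = lin (RE D3) (pairing C (pairing C x1 x2) x3 c) (p, q)"
        using fun_cong[OF fun_cong[OF CR[OF co x3 rp[OF r1 r2] zp]]] by (simp add: comp_def)
      also have "\<dots> = lin (tmap (RE D3) idm) (pairing C (pairing C x2 x3) x1 c) (q, p)"
        apply (rule lin_reindex[where h = "\<lambda>((p, q), r). ((q, r), p)" and g = "\<lambda>((q, r), p). ((p, q), r)"])
            apply auto[2]
          apply (rule rf_fin[OF rp[OF rp[OF r1 r2] r3]])
         apply (clarsimp simp: H[symmetric] PA[of x1 x2 x3])
        apply (clarsimp simp: split_paired_all tmap_def RE_def idm_pair ac_simps)
        done
      also have "\<dots> = pairing C (comp (pairing C x2 x3) (RE D3)) x1 c (q, p)"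
        by (subst liftL2[OF co rp[OF r2 r3] r1, symmetric]) (simp add: comp_def)
      also have "\<dots> = pairing C x2 x1 c (q, p)"
        by (simp add: CR[OF co x3 r2 z2])
      finally show ?thesis .
    qed
    have S13: "pairing C x1 x3 c (p, r) = pairing C x3 x1 c (r, p)" for c p r
    proof -
      have "pairing C x1 x3 c (p, r) = pairing C (comp (pairing C x1 x2) (RE D2)) x3 c (p, r)"
        by (simp add: CR[OF co x2 r1 z1])
      also have "\<dots> = lin (tmap (RE D2) idm) (pairing C (pairing C x1 x2) x3 c) (p, r)"
        by (subst liftL2[OF co rp[OF r1 r2] r3, symmetric]) (simp add: comp_def)
      also have "\<dots> = lin (LE D2) (pairing C x2 (pairing C x3 x1) c) (r, p)"
        apply (rule lin_reindex[where h = "\<lambda>((p, q), r). (q, (r, p))" and g = "\<lambda>(q, (r, p)). ((p, q), r)"])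
            apply auto[2]
          apply (rule rf_fin[OF rp[OF rp[OF r1 r2] r3]])
         apply (clarsimp simp: PA[of x2 x3 x1, symmetric] H[symmetric] PA[of x1 x2 x3])
        apply (clarsimp simp: split_paired_all tmap_def RE_def LE_def idm_pair ac_simps)
        done
      also have "\<dots> = pairing C x3 x1 c (r, p)"
        using fun_cong[OF fun_cong[OF CL[OF co x2 rp[OF r3 r1] zp]]] by (simp add: comp_def)
      finally show ?thesis .
    qed
    have S3: "pairing C (pairing C x1 x2) x3 c (w, r) = pairing C x3 (pairing C x1 x2) c (r, w)" for c w r
    proof (cases w)
      case (Pair p q)
      have "pairing C (pairing C x1 x2) x3 c ((p, q), r) = pairing C x1 (pairing C x2 x3) c (p, (q, r))"
        by (simp add: PA)
      also have "\<dots> = pairing C x1 (pairing C x3 x2) c (p, (r, q))"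
        by (rule cong2[OF co]) (simp add: S23)
      also have "\<dots> = pairing C (pairing C x1 x3) x2 c ((p, r), q)" by (simp add: PA)
      also have "\<dots> = pairing C (pairing C x3 x1) x2 c ((r, p), q)"
        by (rule cong1[OF co]) (simp add: S13)
      also have "\<dots> = pairing C x3 (pairing C x1 x2) c (r, (p, q))" by (simp add: PA)
      finally show ?thesis using Pair by simp
    qed
    show "Sym C x1 x2 \<and> Sym C (pairing C x1 x2) x3"
      unfolding Sym_def using S12 S3 by blast
  qed
qed


theorem mainTheorem1:
  fixes C :: "('c, 'k::field_char_0) coalg" and C' :: "('c2, 'k) coalg"
    and D1 :: "('d1, 'k) coalg" and D2 :: "('d2, 'k) coalg" and D3 :: "('d3, 'k) coalg"
  assumes "is_coalg C" "is_coalg C'" "is_coalg D1" "is_coalg D2" "is_coalg D3"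
  shows
    \<comment> \<open>(i) sub-presheaf, pairing is a coalgebra map, natural isomorphism\<close>
    "cprod D1 D2 C \<subseteq> yon D1 C \<times> yon D2 C
     \<and> (\<forall>f x1 x2. f \<in> yon C C' \<and> (x1, x2) \<in> cprod D1 D2 C
          \<longrightarrow> (comp f x1, comp f x2) \<in> cprod D1 D2 C')
     \<and> (\<forall>x1 x2. (x1, x2) \<in> cprod D1 D2 C \<longrightarrow> pairing C x1 x2 \<in> yon (tensor D1 D2) C)
     \<and> bij_betw (\<lambda>(x1, x2). pairing C x1 x2) (cprod D1 D2 C) (yon (tensor D1 D2) C)
     \<and> (\<forall>f x1 x2. f \<in> yon C C' \<and> (x1, x2) \<in> cprod D1 D2 C
          \<longrightarrow> pairing C' (comp f x1) (comp f x2) = comp f (pairing C x1 x2))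
     \<comment> \<open>(ii) partial associativity\<close>
     \<and> (\<forall>x1 x2 x3. x1 \<in> yon D1 C \<and> x2 \<in> yon D2 C \<and> x3 \<in> yon D3 C \<longrightarrow>
          (((x1, x2) \<in> cprod D1 D2 C \<and> (pairing C x1 x2, x3) \<in> cprod (tensor D1 D2) D3 C)
           \<longleftrightarrow> ((x2, x3) \<in> cprod D2 D3 C \<and> (x1, pairing C x2 x3) \<in> cprod D1 (tensor D2 D3) C))
          \<and> (((x1, x2) \<in> cprod D1 D2 C \<and> (pairing C x1 x2, x3) \<in> cprod (tensor D1 D2) D3 C)
             \<longrightarrow> (\<forall>c p q r. pairing C (pairing C x1 x2) x3 c ((p, q), r)
                           = pairing C x1 (pairing C x2 x3) c (p, (q, r)))))
     \<comment> \<open>(iii) unit\<close>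
     \<and> cprod (unitC :: (unit, 'k) coalg) D1 C = yon unitC C \<times> yon D1 C
     \<and> cprod D1 (unitC :: (unit, 'k) coalg) C = yon D1 C \<times> yon unitC C
     \<comment> \<open>(iv) symmetry\<close>
     \<and> (\<forall>x1 x2. ((x1, x2) \<in> cprod D1 D2 C \<longleftrightarrow> (x2, x1) \<in> cprod D2 D1 C)
          \<and> ((x1, x2) \<in> cprod D1 D2 C \<longrightarrow>
               (\<forall>c a b. pairing C x1 x2 c (a, b) = pairing C x2 x1 c (b, a))))"

proof -
  note co = assms(1) and co' = assms(2) and co1 = assms(3) and co2 = assms(4) and co3 = assms(5)
  have Sym_sw: "Sym C y1 y2 \<longleftrightarrow> Sym C y2 y1" for y1 :: "'c \<Rightarrow> 'a \<Rightarrow> 'k" and y2 :: "'c \<Rightarrow> 'b \<Rightarrow> 'k"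
    unfolding Sym_def by metis
  have P1: "cprod D1 D2 C \<subseteq> yon D1 C \<times> yon D2 C"
    unfolding cprod_def by auto
  have P2: "\<forall>f x1 x2. f \<in> yon C C' \<and> (x1, x2) \<in> cprod D1 D2 C
          \<longrightarrow> (comp f x1, comp f x2) \<in> cprod D1 D2 C'"
  proof (intro allI impI, elim conjE)
    fix f x1 x2 assume f: "f \<in> yon C C'" and x: "(x1, x2) \<in> cprod D1 D2 C"
    then have y: "x1 \<in> yon D1 C" "x2 \<in> yon D2 C" "Sym C x1 x2" using cprod_iff[OF co] by auto
    show "(comp f x1, comp f x2) \<in> cprod D1 D2 C'"
      unfolding cprod_iff[OF co']
      using comp_yon[OF co co' f y(1)] comp_yon[OF co co' f y(2)]
        Sym_comp[OF co co' f yon_rf[OF co y(1)] yon_rf[OF co y(2)] y(3)] by blast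
  qed
  have P3: "\<forall>x1 x2. (x1, x2) \<in> cprod D1 D2 C \<longrightarrow> pairing C x1 x2 \<in> yon (tensor D1 D2) C"
    using pair_yon[OF co] cprod_iff[OF co] by blast
  have P4: "bij_betw (\<lambda>(x1, x2). pairing C x1 x2) (cprod D1 D2 C) (yon (tensor D1 D2) C)"
    unfolding bij_betw_def
  proof
    show "inj_on (\<lambda>(x1, x2). pairing C x1 x2) (cprod D1 D2 C)"
    proof (rule inj_onI, clarify)
      fix x1 x2 y1 y2
      assume x: "(x1, x2) \<in> cprod D1 D2 C" and y: "(y1, y2) \<in> cprod D1 D2 C"
        and e: "pairing C x1 x2 = pairing C y1 y2"
      have xx: "x1 \<in> yon D1 C" "x2 \<in> yon D2 C" using x cprod_iff[OF co] by auto
      have yy: "y1 \<in> yon D1 C" "y2 \<in> yon D2 C" using y cprod_iff[OF co] by auto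
      have "x1 = comp (pairing C x1 x2) (RE D2)"
        using CR[OF co xx(2) yon_rf[OF co xx(1)] yon_zero[OF co xx(1)]] by simp
      also have "\<dots> = y1"
        using CR[OF co yy(2) yon_rf[OF co yy(1)] yon_zero[OF co yy(1)]] e by simp
      finally have 1: "x1 = y1" .
      have "x2 = comp (pairing C x1 x2) (LE D1)"
        using CL[OF co xx(1) yon_rf[OF co xx(2)] yon_zero[OF co xx(2)]] by simp
      also have "\<dots> = y2"
        using CL[OF co yy(1) yon_rf[OF co yy(2)] yon_zero[OF co yy(2)]] e by simp
      finally have 2: "x2 = y2" .
      show "x1 = y1 \<and> x2 = y2" using 1 2 by simp
    qed
  next
    show "(\<lambda>(x1, x2). pairing C x1 x2) ` cprod D1 D2 C = yon (tensor D1 D2) C"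
    proof
      show "(\<lambda>(x1, x2). pairing C x1 x2) ` cprod D1 D2 C \<subseteq> yon (tensor D1 D2) C"
        using P3 by auto
    next
      show "yon (tensor D1 D2) C \<subseteq> (\<lambda>(x1, x2). pairing C x1 x2) ` cprod D1 D2 C"
      proof
        fix g assume g: "g \<in> yon (tensor D1 D2) C"
        have m: "(comp g (RE D2), comp g (LE D1)) \<in> cprod D1 D2 C"
          unfolding cprod_iff[OF co]
          using proj_yon[OF co co1 co2 g] proj_pair(2)[OF co co1 co2 g] by blast
        show "g \<in> (\<lambda>(x1, x2). pairing C x1 x2) ` cprod D1 D2 C"
          by (rule image_eqI[OF _ m]) (simp add: proj_pair(1)[OF co co1 co2 g])
      qed
    qed
  qed
  have P5: "\<forall>f x1 x2. f \<in> yon C C' \<and> (x1, x2) \<in> cprod D1 D2 C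
          \<longrightarrow> pairing C' (comp f x1) (comp f x2) = comp f (pairing C x1 x2)"
  proof (intro allI impI, elim conjE)
    fix f x1 x2 assume f: "f \<in> yon C C'" and x: "(x1, x2) \<in> cprod D1 D2 C"
    then have y: "x1 \<in> yon D1 C" "x2 \<in> yon D2 C" using cprod_iff[OF co] by auto
    show "pairing C' (comp f x1) (comp f x2) = comp f (pairing C x1 x2)"
      by (rule natural[OF co co' f yon_rf[OF co y(1)] yon_rf[OF co y(2)]])
  qed
  have P6: "\<forall>x1 x2 x3. x1 \<in> yon D1 C \<and> x2 \<in> yon D2 C \<and> x3 \<in> yon D3 C \<longrightarrow>
          (((x1, x2) \<in> cprod D1 D2 C \<and> (pairing C x1 x2, x3) \<in> cprod (tensor D1 D2) D3 C)
           \<longleftrightarrow> ((x2, x3) \<in> cprod D2 D3 C \<and> (x1, pairing C x2 x3) \<in> cprod D1 (tensor D2 D3) C))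
          \<and> (((x1, x2) \<in> cprod D1 D2 C \<and> (pairing C x1 x2, x3) \<in> cprod (tensor D1 D2) D3 C)
             \<longrightarrow> (\<forall>c p q r. pairing C (pairing C x1 x2) x3 c ((p, q), r)
                           = pairing C x1 (pairing C x2 x3) c (p, (q, r))))"
  proof (intro allI impI conjI, elim conjE)
    fix x1 x2 x3 assume x1: "x1 \<in> yon D1 C" and x2: "x2 \<in> yon D2 C" and x3: "x3 \<in> yon D3 C"
    have L: "((x1, x2) \<in> cprod D1 D2 C \<and> (pairing C x1 x2, x3) \<in> cprod (tensor D1 D2) D3 C)
        \<longleftrightarrow> (Sym C x1 x2 \<and> Sym C (pairing C x1 x2) x3)"
      unfolding cprod_iff[OF co] using x1 x2 x3 pair_yon[OF co x1 x2] by blast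
    have R: "((x2, x3) \<in> cprod D2 D3 C \<and> (x1, pairing C x2 x3) \<in> cprod D1 (tensor D2 D3) C)
        \<longleftrightarrow> (Sym C x2 x3 \<and> Sym C x1 (pairing C x2 x3))"
      unfolding cprod_iff[OF co] using x1 x2 x3 pair_yon[OF co x2 x3] by blast
    show "((x1, x2) \<in> cprod D1 D2 C \<and> (pairing C x1 x2, x3) \<in> cprod (tensor D1 D2) D3 C)
           \<longleftrightarrow> ((x2, x3) \<in> cprod D2 D3 C \<and> (x1, pairing C x2 x3) \<in> cprod D1 (tensor D2 D3) C)"
      unfolding L R by (rule assoc_main[OF co x1 x2 x3])
  next
    fix x1 x2 x3 c p q r
    show "pairing C (pairing C x1 x2) x3 c ((p, q), r) = pairing C x1 (pairing C x2 x3) c (p, (q, r))"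
      by (rule PA[OF co])
  qed
  have P7: "cprod (unitC :: (unit, 'k) coalg) D1 C = yon unitC C \<times> yon D1 C"
  proof
    show "cprod (unitC :: (unit, 'k) coalg) D1 C \<subseteq> yon unitC C \<times> yon D1 C"
      unfolding cprod_def by auto
    show "yon unitC C \<times> yon D1 C \<subseteq> cprod (unitC :: (unit, 'k) coalg) D1 C"
    proof clarify
      fix x0 x1 assume x0: "x0 \<in> yon (unitC :: (unit, 'k) coalg) C" and x1: "x1 \<in> yon D1 C"
      show "(x0, x1) \<in> cprod unitC D1 C"
        unfolding cprod_iff[OF co] using x0 x1 Sym_unit(1)[OF co x1] yon_unit[OF co x0] by simp
    qed
  qed
  have P8: "cprod D1 (unitC :: (unit, 'k) coalg) C = yon D1 C \<times> yon unitC C"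
  proof
    show "cprod D1 (unitC :: (unit, 'k) coalg) C \<subseteq> yon D1 C \<times> yon unitC C"
      unfolding cprod_def by auto
    show "yon D1 C \<times> yon unitC C \<subseteq> cprod D1 (unitC :: (unit, 'k) coalg) C"
    proof clarify
      fix x0 x1 assume x0: "x0 \<in> yon (unitC :: (unit, 'k) coalg) C" and x1: "x1 \<in> yon D1 C"
      show "(x1, x0) \<in> cprod D1 unitC C"
        unfolding cprod_iff[OF co] using x0 x1 Sym_unit(2)[OF co x1] yon_unit[OF co x0] by simp
    qed
  qed
  have P9: "\<forall>x1 x2. ((x1, x2) \<in> cprod D1 D2 C \<longleftrightarrow> (x2, x1) \<in> cprod D2 D1 C)
          \<and> ((x1, x2) \<in> cprod D1 D2 C \<longrightarrow>
               (\<forall>c a b. pairing C x1 x2 c (a, b) = pairing C x2 x1 c (b, a)))"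
  proof (intro allI conjI impI)
    fix x1 x2
    show "(x1, x2) \<in> cprod D1 D2 C \<longleftrightarrow> (x2, x1) \<in> cprod D2 D1 C"
      unfolding cprod_iff[OF co] using Sym_sw by blast
    fix c a b assume "(x1, x2) \<in> cprod D1 D2 C"
    then show "pairing C x1 x2 c (a, b) = pairing C x2 x1 c (b, a)"
      unfolding cprod_iff[OF co] Sym_def by blast
  qed
  show ?thesis using P1 P2 P3 P4 P5 P6 P7 P8 P9 by blast
qed


end
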